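(* For every $\epsilon>0$ there exists $\delta>0$ such that, for $k<e^{\delta n}$ (where $n$ is the number of variables), no deterministic online width-cut-$k$ algorithm can achieve an asymptotic approximation ratio of $3/4+\epsilon$ for unweighted exact max-2-sat with input model 2.
   Context: Unweighted exact max-2-sat: the input is a CNF formula in which every clause has exactly two literals (all clause weights 1); the goal is an assignment maximizing the number of satisfied clauses. Online: variables arrive one at a time in adversarial order, each with a data item, and must be irrevocably assigned upon arrival. In input model 2, the data item of a variable consists of the names (and weights) of the clauses in which it appears positively and those in which it appears negatively, the length of each such clause, and for each such clause the names of the other variables occurring in it (but not the signs of those other variables). Width-cut-$k$ model: the algorithm maintains a tree of partial assignments, the root being the empty assignment at level 0; when the $i$-th variable is processed each node at level $i-1$ may get any number of children (including zero, i.e. be cut), each extending it by a value for that variable; at most $k$ nodes may exist at each level; at the end the best complete assignment is output. The asymptotic approximation ratio of $\mathbb{A}$ is $\liminf_{n}\inf_{I\in\mathcal{I}_n} v(\mathbb{A},I)/v(I)$, where $\mathcal{I}_n$ are the instances of size $n$, $v(\mathbb{A},I)$ is the algorithm's value and $v(I)$ the optimum. *)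

theory Defs
  imports "HOL-Analysis.Analysis"
begin

(* Variables and clause names are natural numbers.
   A literal is (variable, sign); sign True = positive occurrence. *)
type_synonym lit = "nat \<times> bool"

(* An exact max-2-sat instance presented online:
     xs  : the variables in their (adversarial) order of arrival (distinct);
     C   : the finite set of clause names;
     cl  : clause name \<mapsto> its two literals (on two distinct variables).
   All clause weights are 1 (unweighted).  The size n of the instance is length xs. *)
definition wf_instance :: "nat list \<Rightarrow> nat set \<Rightarrow> (nat \<Rightarrow> lit \<times> lit) \<Rightarrow> bool" where
  "wf_instance xs C cl \<longleftrightarrow> distinct xs \<and> finite C \<and>
     (\<forall>c\<in>C. fst (fst (cl c)) \<in> set xs \<and> fst (snd (cl c)) \<in> set xs \<and>
             fst (fst (cl c)) \<noteq> fst (snd (cl c)))"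

definition lit_sat :: "(nat \<Rightarrow> bool) \<Rightarrow> lit \<Rightarrow> bool" where
  "lit_sat a l \<longleftrightarrow> a (fst l) = snd l"

definition num_sat :: "(nat \<Rightarrow> bool) \<Rightarrow> nat set \<Rightarrow> (nat \<Rightarrow> lit \<times> lit) \<Rightarrow> nat" where
  "num_sat a C cl = card {c\<in>C. lit_sat a (fst (cl c)) \<or> lit_sat a (snd (cl c))}"

definition opt_val :: "nat set \<Rightarrow> (nat \<Rightarrow> lit \<times> lit) \<Rightarrow> nat" where
  "opt_val C cl = Max ((\<lambda>a. num_sat a C cl) ` UNIV)"

(* Input model 2.  An occurrence record of a clause containing the variable:
   (clause name, clause weight, clause length, names of the other variables of the clause).
   The signs of the other variables are NOT revealed. *)
type_synonym occ = "nat \<times> nat \<times> nat \<times> nat set"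

(* data item of a variable: (its name, occurrences as positive literal, occurrences as negative literal) *)
type_synonym data_item = "nat \<times> occ set \<times> occ set"

definition occs :: "nat set \<Rightarrow> (nat \<Rightarrow> lit \<times> lit) \<Rightarrow> nat \<Rightarrow> bool \<Rightarrow> occ set" where
  "occs C cl x s =
     {(c, 1, 2, {fst (snd (cl c))}) | c. c \<in> C \<and> fst (cl c) = (x, s)} \<union>
     {(c, 1, 2, {fst (fst (cl c))}) | c. c \<in> C \<and> snd (cl c) = (x, s)}"

definition data_item :: "nat set \<Rightarrow> (nat \<Rightarrow> lit \<times> lit) \<Rightarrow> nat \<Rightarrow> data_item" where
  "data_item C cl x = (x, occs C cl x True, occs C cl x False)"

(* A deterministic online width-cut algorithm is given by the map sending the sequence
   d_1..d_i of data items received so far to the set of nodes of level i of its tree of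
   partial assignments, a node being the list of values given to the first i variables.
   (Being a function of the prefix only encodes that decisions are online/irrevocable.) *)
type_synonym wc_alg = "data_item list \<Rightarrow> bool list set"

definition width_cut_alg :: "(nat \<Rightarrow> nat) \<Rightarrow> wc_alg \<Rightarrow> bool" where
  "width_cut_alg k A \<longleftrightarrow>
     (\<forall>xs C cl. wf_instance xs C cl \<longrightarrow>
        (let ds = map (data_item C cl) xs; n = length xs in
           A [] = {[]} \<and>
           (\<forall>i<n. \<forall>b\<in>A (take (Suc i) ds). length b = Suc i \<and> butlast b \<in> A (take i ds)) \<and>
           (\<forall>i\<le>n. card (A (take i ds)) \<le> k n)))"

(* complete assignment described by a leaf b: the j-th arriving variable gets value b!j *)
definition leaf_assign :: "nat list \<Rightarrow> bool list \<Rightarrow> nat \<Rightarrow> bool" where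
  "leaf_assign xs b v = (case map_of (zip xs b) v of Some t \<Rightarrow> t | None \<Rightarrow> False)"

(* v(A,I): value of the best complete assignment in the final level (0 if all nodes were cut) *)
definition alg_val :: "wc_alg \<Rightarrow> nat list \<Rightarrow> nat set \<Rightarrow> (nat \<Rightarrow> lit \<times> lit) \<Rightarrow> nat" where
  "alg_val A xs C cl =
     Max (insert 0 ((\<lambda>b. num_sat (leaf_assign xs b) C cl) ` A (map (data_item C cl) xs)))"

(* v(A,I)/v(I), with the convention that the ratio is 1 when v(I) = 0 (no clauses) *)
definition inst_ratio :: "wc_alg \<Rightarrow> nat list \<Rightarrow> nat set \<Rightarrow> (nat \<Rightarrow> lit \<times> lit) \<Rightarrow> real" where
  "inst_ratio A xs C cl =
     (if opt_val C cl = 0 then 1 else real (alg_val A xs C cl) / real (opt_val C cl))"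

definition worst_ratio :: "wc_alg \<Rightarrow> nat \<Rightarrow> real" where
  "worst_ratio A n =
     (INF I \<in> {(xs, C, cl). wf_instance xs C cl \<and> length xs = n}.
        (case I of (xs, C, cl) \<Rightarrow> inst_ratio A xs C cl))"

definition asymp_ratio :: "wc_alg \<Rightarrow> ereal" where
  "asymp_ratio A = liminf (\<lambda>n. ereal (worst_ratio A n))"

end

theory Submission
  imports Defs
begin


definition clI :: "nat \<Rightarrow> nat set \<Rightarrow> nat \<Rightarrow> lit \<times> lit" where
  "clI m R c = ((c div 2, even c), (m, even c = (c div 2 \<in> R)))"

definition Dset :: "nat \<Rightarrow> bool list \<Rightarrow> nat set \<Rightarrow> nat set" where
  "Dset m a R = {i. i < m \<and> a ! i = (i \<in> R)}"

lemma wf_I: "wf_instance [0..<Suc m] {..<2*m} (clI m R)"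
  unfolding wf_instance_def clI_def by auto

lemma clI_fst: "fst (clI m R c) = (c div 2, even c)" by (simp add: clI_def)
lemma clI_snd_var: "fst (snd (clI m R c)) = m" by (simp add: clI_def)
lemma clI_snd_ne: "i \<noteq> m \<Longrightarrow> snd (clI m R c) \<noteq> (i, s)" by (simp add: clI_def)

lemma occs_I:
  assumes "i < m"
  shows "occs {..<2*m} (clI m R) i s = occs {..<2*m} (clI m {}) i s"
proof -
  have ne: "\<And>R c. snd (clI m R c) \<noteq> (i, s)" using assms clI_snd_ne by simp
  show ?thesis unfolding occs_def clI_fst clI_snd_var using ne by simp
qed

lemma prefix_I:
  "take m (map (data_item {..<2*m} (clI m R)) [0..<Suc m]) = map (data_item {..<2*m} (clI m {})) [0..<m]"
proof -
  have "take m (map (data_item {..<2*m} (clI m R)) [0..<Suc m]) = map (data_item {..<2*m} (clI m R)) [0..<m]"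
    by (simp del: upt_Suc add: take_map)
  also have "\<dots> = map (data_item {..<2*m} (clI m {})) [0..<m]"
  proof (rule map_cong)
    fix i assume "i \<in> set [0..<m]"
    then have "i < m" by simp
    then show "data_item {..<2*m} (clI m R) i = data_item {..<2*m} (clI m {}) i"
      unfolding data_item_def using occs_I[of i m R True] occs_I[of i m R False] by simp
  qed simp
  finally show ?thesis .
qed

lemma leaf_I:
  assumes "length b = Suc m" "v < Suc m"
  shows "leaf_assign [0..<Suc m] b v = b ! v"
proof -
  have "map_of (zip [0..<Suc m] b) ([0..<Suc m] ! v) = Some (b ! v)"
    using assms by (intro map_of_zip_nth) (auto simp del: upt_Suc)
  moreover have "[0..<Suc m] ! v = v" using assms by (simp del: upt_Suc)
  ultimately show ?thesis using assms unfolding leaf_assign_def by (simp del: upt_Suc)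
qed

lemma cl_even: "clI m R (2*i) = ((i, True), (m, i \<in> R))"
  by (simp add: clI_def)

lemma cl_odd: "clI m R (Suc (2*i)) = ((i, False), (m, i \<notin> R))"
proof -
  have "odd (Suc (2*i))" by simp
  moreover have "(Suc (2*i)) div 2 = i" by simp
  ultimately show ?thesis unfolding clI_def by presburger
qed

lemma num_sat_gen:
  fixes a :: "nat \<Rightarrow> bool" and m :: nat and R :: "nat set"
  defines "D \<equiv> {i. i < m \<and> a i = (i \<in> R)}"
  shows "num_sat a {..<2*m} (clI m R) + card (if a m then D else {..<m} - D) \<le> 2 * m"
proof -
  define M where "M = (if a m then D else {..<m} - D)"
  define Sat where "Sat = {c \<in> {..<2*m}. lit_sat a (fst (clI m R c)) \<or> lit_sat a (snd (clI m R c))}"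
  define f where "f i = (if a i then Suc (2*i) else 2*i)" for i :: nat
  have Mm: "M \<subseteq> {..<m}" by (auto simp: M_def D_def)
  have injf: "inj_on f M"
  proof (rule inj_onI)
    fix i j assume "f i = f j"
    then have "f i div 2 = f j div 2" by simp
    moreover have "f i div 2 = i" "f j div 2 = j" unfolding f_def by auto
    ultimately show "i = j" by simp
  qed
  have fC: "f ` M \<subseteq> {..<2*m}"
  proof
    fix c assume "c \<in> f ` M"
    then obtain i where "i \<in> M" "c = f i" by blast
    then have "i < m" using Mm by auto
    then show "c \<in> {..<2*m}" using \<open>c = f i\<close> unfolding f_def by auto
  qed
  have fS: "f i \<notin> Sat" if iM: "i \<in> M" for i
  proof (cases "a i")
    case True
    then have fi: "f i = Suc (2*i)" by (simp add: f_def)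
    have "a m \<noteq> (i \<notin> R)"
      using iM True by (cases "a m") (auto simp: M_def D_def)
    then show ?thesis using True unfolding fi Sat_def using cl_odd[of m R i] by (simp add: lit_sat_def)
  next
    case False
    then have fi: "f i = 2*i" by (simp add: f_def)
    have "a m \<noteq> (i \<in> R)"
      using iM False by (cases "a m") (auto simp: M_def D_def)
    then show ?thesis using False unfolding fi Sat_def using cl_even[of m R i] by (simp add: lit_sat_def)
  qed
  have "Sat \<subseteq> {..<2*m} - f ` M" using fS by (auto simp: Sat_def)
  then have "card Sat \<le> card ({..<2*m} - f ` M)" by (intro card_mono) auto
  also have "\<dots> = 2*m - card (f ` M)" using fC by (simp add: card_Diff_subset finite_subset)
  also have "card (f ` M) = card M" using injf by (simp add: card_image)
  finally have "card Sat \<le> 2*m - card M" .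
  moreover have "card M \<le> m" using Mm by (metis card_lessThan card_mono finite_lessThan)
  ultimately have "card Sat + card M \<le> 2*m" by linarith
  then show ?thesis unfolding num_sat_def Sat_def M_def .
qed

lemma num_sat_I:
  assumes "length b = Suc m"
  shows "num_sat (leaf_assign [0..<Suc m] b) {..<2*m} (clI m R) + 
     card (if b ! m then Dset m (butlast b) R else {..<m} - Dset m (butlast b) R) \<le> 2 * m"
proof -
  let ?a = "leaf_assign [0..<Suc m] b"
  have am: "?a m = b ! m" using assms by (simp add: leaf_I del: upt_Suc)
  have "Dset m (butlast b) R = {i. i < m \<and> ?a i = (i \<in> R)}"
    using assms by (auto simp: Dset_def leaf_I nth_butlast simp del: upt_Suc)
  then show ?thesis using num_sat_gen[of ?a m R] am by (cases "b ! m") (simp_all del: upt_Suc)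
qed

lemma num_sat_opt_I:
  "num_sat (\<lambda>v. v < m \<and> v \<in> R) {..<2*m} (clI m R) = 2 * m"
proof -
  let ?a = "\<lambda>v. v < m \<and> v \<in> R"
  have "lit_sat ?a (fst (clI m R c)) \<or> lit_sat ?a (snd (clI m R c))" if "c < 2*m" for c
  proof -
    have cm: "c div 2 < m" using that by simp
    show ?thesis
    proof (cases "even c")
      case True
      then have "clI m R c = ((c div 2, True), (m, c div 2 \<in> R))" by (simp add: clI_def)
      then show ?thesis using cm unfolding lit_sat_def by (cases "c div 2 \<in> R") auto
    next
      case False
      then have "clI m R c = ((c div 2, False), (m, c div 2 \<notin> R))" by (simp add: clI_def)
      then show ?thesis using cm unfolding lit_sat_def by (cases "c div 2 \<in> R") auto
    qed
  qed
  then have "{c \<in> {..<2*m}. lit_sat ?a (fst (clI m R c)) \<or> lit_sat ?a (snd (clI m R c))} = {..<2*m}"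
    by blast
  then show ?thesis unfolding num_sat_def by simp
qed



lemma pow_sum_Pow:
  fixes x :: real
  assumes "finite U"
  shows "(\<Sum>D\<in>Pow U. x ^ card D) = (1 + x) ^ card U"
  using assms
proof (induction U rule: finite_induct)
  case empty then show ?case by simp
next
  case (insert a U)
  have disj: "Pow U \<inter> insert a ` Pow U = {}" using insert by auto
  have inj: "inj_on (insert a) (Pow U)"
  proof (rule inj_onI)
    fix X Y assume XY: "X \<in> Pow U" "Y \<in> Pow U" "insert a X = insert a Y"
    then have "a \<notin> X" "a \<notin> Y" using insert by auto
    then show "X = Y" using XY(3) by (metis Diff_insert_absorb)
  qed
  have "(\<Sum>D\<in>Pow (insert a U). x ^ card D) = (\<Sum>D\<in>Pow U. x ^ card D) + (\<Sum>D\<in>insert a ` Pow U. x ^ card D)"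
    using insert disj by (simp add: Pow_insert sum.union_disjoint)
  also have "(\<Sum>D\<in>insert a ` Pow U. x ^ card D) = (\<Sum>D\<in>Pow U. x ^ card (insert a D))"
    using inj by (simp add: sum.reindex)
  also have "\<dots> = (\<Sum>D\<in>Pow U. x * x ^ card D)"
  proof (rule sum.cong)
    fix D assume "D \<in> Pow U"
    then have "finite D" "a \<notin> D" using insert finite_subset by auto
    then show "x ^ card (insert a D) = x * x ^ card D" by simp
  qed simp
  also have "\<dots> = x * (\<Sum>D\<in>Pow U. x ^ card D)" by (simp add: sum_distrib_left)
  finally show ?case using insert by (simp add: algebra_simps)
qed

lemma chernoff_sets:
  fixes x t :: real
  assumes "finite U" "0 < x" "x \<le> 1" "0 \<le> t"
  shows "real (card {D\<in>Pow U. real (card D) < t}) * x powr t \<le> (1 + x) ^ card U"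
proof -
  let ?B = "{D\<in>Pow U. real (card D) < t}"
  have "real (card ?B) * x powr t = (\<Sum>D\<in>?B. x powr t)" by simp
  also have "\<dots> \<le> (\<Sum>D\<in>?B. x ^ card D)"
  proof (rule sum_mono)
    fix D assume "D \<in> ?B"
    then have "real (card D) \<le> t" by simp
    then have "x powr t \<le> x powr real (card D)" using assms by (intro powr_mono') auto
    then show "x powr t \<le> x ^ card D" using assms by (simp add: powr_realpow)
  qed
  also have "\<dots> \<le> (\<Sum>D\<in>Pow U. x ^ card D)"
    using assms by (intro sum_mono2) auto
  also have "\<dots> = (1 + x) ^ card U" using pow_sum_Pow assms by blast
  finally show ?thesis .
qed

lemma powr_conv:
  fixes s a :: real
  assumes "0 < s" "0 \<le> a" "a \<le> 1"
  shows "s powr a \<le> 1 - a + a * s"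
  using Youngs_inequality_0[of a "1 - a" s 1] assms by (simp add: algebra_simps)

lemma q_lt_2:
  fixes \<eta> :: real
  assumes "0 < \<eta>" "\<eta> \<le> 1/4"
  defines "s \<equiv> 1 - \<eta>"
  shows "(1 + s^2) / ((s^2) powr (1/2 - \<eta>)) < 2" and "0 < (1 + s^2) / ((s^2) powr (1/2 - \<eta>))"
proof -
  have s: "0 < s" "s < 1" using assms by auto
  have e1: "(s^2) powr (1/2 - \<eta>) = s powr (1 - 2*\<eta>)"
  proof -
    have "s^2 = s powr 2" using s by simp
    then have "(s^2) powr (1/2 - \<eta>) = s powr (2 * (1/2 - \<eta>))" by (simp only: powr_powr)
    also have "2 * (1/2 - \<eta>) = 1 - 2*\<eta>" by simp
    finally show ?thesis .
  qed
  have e2: "s powr (1 - 2*\<eta>) = s / s powr (2*\<eta>)"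
    using s by (simp add: powr_diff del: powr_numeral)
  have c: "s powr (2*\<eta>) \<le> 1 - 2*\<eta> + 2*\<eta>* s" using powr_conv[of s "2*\<eta>"] s assms by auto
  have c2: "1 - 2*\<eta> + 2*\<eta>* s = 1 - 2*\<eta>^2" unfolding s_def by (simp add: power2_eq_square algebra_simps)
  have pp: "0 < s powr (2*\<eta>)" using s by simp
  have "(1 + s^2) / ((s^2) powr (1/2 - \<eta>)) = (1 + s^2) * s powr (2*\<eta>) / s"
    using e1 e2 s pp by (simp add: field_simps)
  also have "\<dots> \<le> (1 + s^2) * (1 - 2*\<eta>^2) / s"
    using c c2 s by (intro divide_right_mono mult_left_mono) auto
  also have "\<dots> < 2"
  proof -
    have "(1 + s^2) * (1 - 2*\<eta>^2) < 2 * s"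
    proof -
      have "(1 + s^2) * (1 - 2*\<eta>^2) - 2 * s = - (\<eta>^2) * (3 - 4*\<eta> + 2*\<eta>^2)"
        unfolding s_def by (simp add: power2_eq_square algebra_simps)
      moreover have "3 - 4*\<eta> + 2*\<eta>^2 = 1 + 2*(1-\<eta>)^2" by (simp add: power2_eq_square algebra_simps)
      moreover have "(1-\<eta>)^2 \<ge> 0" by simp
      ultimately have "3 - 4*\<eta> + 2*\<eta>^2 > 0" by linarith
      moreover have "\<eta>^2 > 0" using assms by simp
      ultimately have "\<eta>^2 * (3 - 4*\<eta> + 2*\<eta>^2) > 0" by (rule mult_pos_pos[rotated])
      with \<open>(1 + s^2) * (1 - 2*\<eta>^2) - 2 * s = - (\<eta>^2) * (3 - 4*\<eta> + 2*\<eta>^2)\<close> show ?thesis by linarith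
    qed
    then show ?thesis using s by (simp add: divide_simps)
  qed
  finally show "(1 + s^2) / ((s^2) powr (1/2 - \<eta>)) < 2" .
  have p1: "0 < 1 + s^2" by (metis add_pos_nonneg zero_less_one zero_le_power2)
  have p2: "0 < (s^2) powr (1/2 - \<eta>)" using s by simp
  show "0 < (1 + s^2) / ((s^2) powr (1/2 - \<eta>))" using p1 p2 by (rule divide_pos_pos)
qed



lemma Dset_inj:
  assumes "R1 \<subseteq> {..<m}" "R2 \<subseteq> {..<m}" "Dset m a R1 = Dset m a R2"
  shows "R1 = R2"
proof -
  have "i \<in> R1 \<longleftrightarrow> i \<in> R2" if "i < m" for i
  proof -
    have "(i \<in> Dset m a R1) = (i \<in> Dset m a R2)" using assms by simp
    then show ?thesis using that unfolding Dset_def by auto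
  qed
  then show ?thesis using assms by blast
qed

lemma exists_good:
  fixes S :: "bool list set" and t :: real
  assumes fin: "finite S"
    and lt: "real (card S) * 2 * real (card {D\<in>Pow {..<m}. real (card D) < t}) < 2^m"
  shows "\<exists>R. R \<subseteq> {..<m} \<and> (\<forall>a\<in>S. t \<le> real (card (Dset m a R)) \<and> t \<le> real (card ({..<m} - Dset m a R)))"
proof -
  define U where "U = {..<m::nat}"
  define T where "T = {D\<in>Pow U. real (card D) < t}"
  define B1 where "B1 a = {R\<in>Pow U. real (card (Dset m a R)) < t}" for a
  define B2 where "B2 a = {R\<in>Pow U. real (card (U - Dset m a R)) < t}" for a
  have finT: "finite T" unfolding T_def U_def by simp
  have DU: "Dset m a R \<subseteq> U" for a R unfolding Dset_def U_def by auto
  have c1: "card (B1 a) \<le> card T" for a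
  proof (rule card_inj_on_le[where f = "\<lambda>R. Dset m a R"])
    show "inj_on (\<lambda>R. Dset m a R) (B1 a)"
    proof (rule inj_onI)
      fix R1 R2 assume "R1 \<in> B1 a" "R2 \<in> B1 a" "Dset m a R1 = Dset m a R2"
      then show "R1 = R2" using Dset_inj[of R1 m R2 a] by (auto simp: B1_def U_def)
    qed
    show "(\<lambda>R. Dset m a R) ` B1 a \<subseteq> T" using DU by (auto simp: B1_def T_def)
  qed (rule finT)
  have c2: "card (B2 a) \<le> card T" for a
  proof (rule card_inj_on_le[where f = "\<lambda>R. U - Dset m a R"])
    show "inj_on (\<lambda>R. U - Dset m a R) (B2 a)"
    proof (rule inj_onI)
      fix R1 R2 assume "R1 \<in> B2 a" "R2 \<in> B2 a" "U - Dset m a R1 = U - Dset m a R2"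
      moreover have "Dset m a R1 = U - (U - Dset m a R1)" "Dset m a R2 = U - (U - Dset m a R2)"
        using DU by auto
      ultimately have "Dset m a R1 = Dset m a R2" by simp
      then show "R1 = R2" using \<open>R1 \<in> B2 a\<close> \<open>R2 \<in> B2 a\<close> Dset_inj[of R1 m R2 a] by (auto simp: B2_def U_def)
    qed
    show "(\<lambda>R. U - Dset m a R) ` B2 a \<subseteq> T" by (auto simp: B2_def T_def)
  qed (rule finT)
  have cb: "card (B1 a \<union> B2 a) \<le> 2 * card T" for a
    using card_Un_le[of "B1 a" "B2 a"] c1[of a] c2[of a] by linarith
  have "card (\<Union>a\<in>S. B1 a \<union> B2 a) \<le> (\<Sum>a\<in>S. card (B1 a \<union> B2 a))"
    by (rule card_UN_le[OF fin])
  also have "\<dots> \<le> (\<Sum>a\<in>S. 2 * card T)" by (rule sum_mono) (rule cb)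
  also have "\<dots> = card S * (2 * card T)" by simp
  finally have "real (card (\<Union>a\<in>S. B1 a \<union> B2 a)) \<le> real (card S) * 2 * real (card T)"
  proof -
    assume h: "card (\<Union>a\<in>S. B1 a \<union> B2 a) \<le> card S * (2 * card T)"
    have "real (card (\<Union>a\<in>S. B1 a \<union> B2 a)) \<le> real (card S * (2 * card T))"
      using h by (simp only: of_nat_le_iff)
    then show ?thesis by simp
  qed
  also have "\<dots> < 2^m" using lt unfolding T_def U_def .
  also have "(2::real)^m = real (card (Pow U))" unfolding U_def by (simp add: card_Pow)
  finally have "card (\<Union>a\<in>S. B1 a \<union> B2 a) < card (Pow U)" by linarith
  have "\<not> Pow U \<subseteq> (\<Union>a\<in>S. B1 a \<union> B2 a)"
  proof
    assume "Pow U \<subseteq> (\<Union>a\<in>S. B1 a \<union> B2 a)"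
    moreover have "finite (\<Union>a\<in>S. B1 a \<union> B2 a)"
      using fin by (intro finite_UN_I) (auto simp: B1_def B2_def U_def)
    ultimately have "card (Pow U) \<le> card (\<Union>a\<in>S. B1 a \<union> B2 a)" by (rule card_mono[rotated])
    then show False using \<open>card (\<Union>a\<in>S. B1 a \<union> B2 a) < card (Pow U)\<close> by linarith
  qed
  then obtain R where "R \<in> Pow U" "R \<notin> (\<Union>a\<in>S. B1 a \<union> B2 a)" by blast
  then show ?thesis unfolding U_def B1_def B2_def by (auto simp: not_less)
qed


lemma inst_ratio_nonneg: "0 \<le> inst_ratio A xs C cl"
  unfolding inst_ratio_def by simp

lemma num_sat_le_card: "finite C \<Longrightarrow> num_sat a C cl \<le> card C"
  unfolding num_sat_def by (rule card_mono) auto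

lemma ratio_bound:
  assumes wc: "width_cut_alg k A" and m1: "m \<ge> 1" and t0: "0 \<le> t" and tm: "t \<le> real m"
    and lt: "real (k (Suc m)) * 2 * real (card {D\<in>Pow {..<m}. real (card D) < t}) < 2^m"
  shows "worst_ratio A (Suc m) \<le> (2*m - t) / (2*m)"
proof -
  define C where "C = {..<2*m}"
  define xs where "xs = [0..<Suc m]"
  define ds0 where "ds0 = map (data_item C (clI m {})) xs"
  define S where "S = A (map (data_item C (clI m {})) [0..<m])"
  have lenxs: "length xs = Suc m" unfolding xs_def by simp
  have wf0: "wf_instance xs C (clI m {})" unfolding xs_def C_def by (rule wf_I)
  have W0: "A [] = {[]} \<and>
           (\<forall>i<Suc m. \<forall>b\<in>A (take (Suc i) ds0). length b = Suc i \<and> butlast b \<in> A (take i ds0)) \<and>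
           (\<forall>i\<le>Suc m. card (A (take i ds0)) \<le> k (Suc m))"
    using wc wf0 lenxs unfolding width_cut_alg_def ds0_def Let_def by metis
  have tk0: "take m ds0 = map (data_item C (clI m {})) [0..<m]"
    unfolding ds0_def xs_def C_def by (rule prefix_I)
  have cardS: "card S \<le> k (Suc m)" using W0 tk0 unfolding S_def by (metis le_SucI order_refl)
  have lenS: "length b = m" if "b \<in> S" for b
  proof -
    have "m - 1 < Suc m" "Suc (m - 1) = m" using m1 by auto
    then show ?thesis using W0 that tk0 unfolding S_def by metis
  qed
  have finS: "finite S"
  proof (rule finite_subset)
    show "S \<subseteq> {b. set b \<subseteq> (UNIV :: bool set) \<and> length b = m}" using lenS by auto
    show "finite {b. set b \<subseteq> (UNIV :: bool set) \<and> length b = m}" by (rule finite_lists_length_eq) simp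
  qed
  have "real (card S) * 2 * real (card {D\<in>Pow {..<m}. real (card D) < t})
        \<le> real (k (Suc m)) * 2 * real (card {D\<in>Pow {..<m}. real (card D) < t})"
    using cardS by (intro mult_right_mono) auto
  then have "real (card S) * 2 * real (card {D\<in>Pow {..<m}. real (card D) < t}) < 2^m" using lt by linarith
  then obtain R where R: "R \<subseteq> {..<m}"
    "\<forall>a\<in>S. t \<le> real (card (Dset m a R)) \<and> t \<le> real (card ({..<m} - Dset m a R))"
    using exists_good[OF finS] by blast
  define ds where "ds = map (data_item C (clI m R)) xs"
  have wfR: "wf_instance xs C (clI m R)" unfolding xs_def C_def by (rule wf_I)
  have WR: "\<forall>i<Suc m. \<forall>b\<in>A (take (Suc i) ds). length b = Suc i \<and> butlast b \<in> A (take i ds)"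
    using wc wfR lenxs unfolding width_cut_alg_def ds_def Let_def by metis
  have tkR: "take m ds = map (data_item C (clI m {})) [0..<m]"
    unfolding ds_def xs_def C_def by (rule prefix_I)
  have tkR2: "take (Suc m) ds = ds" unfolding ds_def using lenxs by simp
  have leaf: "length b = Suc m \<and> butlast b \<in> S" if "b \<in> A ds" for b
    using WR that tkR tkR2 unfolding S_def by (metis lessI)
  have bnd: "real (num_sat (leaf_assign xs b) C (clI m R)) \<le> 2*m - t" if "b \<in> A ds" for b
  proof -
    have lb: "length b = Suc m" and bS: "butlast b \<in> S" using leaf[OF that] by auto
    have ns: "num_sat (leaf_assign xs b) C (clI m R) +
       card (if b ! m then Dset m (butlast b) R else {..<m} - Dset m (butlast b) R) \<le> 2 * m"
      unfolding xs_def C_def by (rule num_sat_I[OF lb])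
    have "t \<le> real (card (if b ! m then Dset m (butlast b) R else {..<m} - Dset m (butlast b) R))"
      using R(2) bS by auto
    moreover have "real (num_sat (leaf_assign xs b) C (clI m R)) +
       real (card (if b ! m then Dset m (butlast b) R else {..<m} - Dset m (butlast b) R)) \<le> 2 * m"
      using ns by (metis of_nat_add of_nat_le_iff of_nat_mult of_nat_numeral)
    ultimately show ?thesis by linarith
  qed
  have finA: "finite (A ds)"
  proof (rule finite_subset)
    show "A ds \<subseteq> {b. set b \<subseteq> (UNIV :: bool set) \<and> length b = Suc m}" using leaf by auto
    show "finite {b. set b \<subseteq> (UNIV :: bool set) \<and> length b = Suc m}" by (rule finite_lists_length_eq) simp
  qed
  define V where "V = insert 0 ((\<lambda>b. num_sat (leaf_assign xs b) C (clI m R)) ` A ds)"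
  have finV: "finite V" unfolding V_def using finA by simp
  have "Max V \<in> V" using finV by (intro Max_in) (auto simp: V_def)
  then have alg: "real (alg_val A xs C (clI m R)) \<le> 2*m - t"
    unfolding alg_val_def ds_def[symmetric] V_def[symmetric] using bnd tm by (auto simp: V_def)
  have finC: "finite C" unfolding C_def by simp
  have finO: "finite ((\<lambda>a. num_sat a C (clI m R)) ` UNIV)"
    by (rule finite_subset[of _ "{..card C}"]) (auto simp: num_sat_le_card[OF finC])
  have "num_sat (\<lambda>v. v < m \<and> v \<in> R) C (clI m R) \<le> opt_val C (clI m R)"
    unfolding opt_val_def by (rule Max_ge[OF finO]) simp
  then have opt: "2*m \<le> opt_val C (clI m R)" unfolding C_def using num_sat_opt_I by simp
  then have optr: "real (2*m) \<le> real (opt_val C (clI m R))" by linarith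
  have pos: "0 < real (2*m)" using m1 by simp
  have "inst_ratio A xs C (clI m R) = real (alg_val A xs C (clI m R)) / real (opt_val C (clI m R))"
    unfolding inst_ratio_def using opt m1 by auto
  also have "\<dots> \<le> (2*m - t) / real (opt_val C (clI m R))"
    using alg by (intro divide_right_mono) auto
  also have "\<dots> \<le> (2*m - t) / real (2*m)"
    using optr pos tm by (intro divide_left_mono) auto
  finally have ir: "inst_ratio A xs C (clI m R) \<le> (2*m - t) / (2*m)" by simp
  have mem: "(xs, C, clI m R) \<in> {(xs, C, cl). wf_instance xs C cl \<and> length xs = Suc m}"
    using wfR lenxs by simp
  have "worst_ratio A (Suc m) \<le> (case (xs, C, clI m R) of (xs, C, cl) \<Rightarrow> inst_ratio A xs C cl)"
    unfolding worst_ratio_def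
    by (rule cINF_lower[OF _ mem]) (auto intro!: bdd_belowI[where m = 0] simp: inst_ratio_nonneg)
  then show ?thesis using ir by simp
qed



lemma key_ineq:
  fixes \<delta> q :: real and m :: nat
  assumes q: "0 < q" "q < 2" and d: "\<delta> = - ln (q/2) / 2" and mlarge: "\<delta> * real m \<ge> ln 2 + \<delta>"
  shows "exp (\<delta> * real (Suc m)) * 2 * q^m \<le> 2^m"
proof -
  have qq: "(q/2)^m = exp (- 2 * \<delta> * real m)"
  proof -
    have h: "(q/2)^m = exp (real m * ln (q/2))" using q by (simp add: exp_of_nat_mult)
    have l: "ln (q/2) = - 2 * \<delta>" using d by linarith
    have h2: "real m * ln (q/2) = - 2 * \<delta> * real m" unfolding l by (simp only: mult.commute mult.left_commute)
    show ?thesis by (simp only: h h2)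
  qed
  have e: "exp (\<delta> * real (Suc m)) * 2 * exp (- 2 * \<delta> * real m) = exp (\<delta> * real (Suc m) + ln 2 + (- 2 * \<delta> * real m))"
    unfolding exp_add by simp
  have "exp (\<delta> * real (Suc m)) * 2 * (q/2)^m = exp (\<delta> * real (Suc m) + ln 2 + (- 2 * \<delta> * real m))"
    unfolding qq e ..
  also have "\<dots> \<le> 1" using mlarge by (simp add: algebra_simps)
  finally have "exp (\<delta> * real (Suc m)) * 2 * (q/2)^m \<le> 1" .
  then have A: "exp (\<delta> * real (Suc m)) * 2 * (q/2)^m * 2^m \<le> 1 * 2^m"
    by (rule mult_right_mono) simp
  have pd: "(q/2)^m * 2^m = q^m" by (simp add: power_divide)
  have "exp (\<delta> * real (Suc m)) * 2 * (q/2)^m * 2^m = exp (\<delta> * real (Suc m)) * 2 * ((q/2)^m * 2^m)"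
    by (simp only: mult.assoc)
  also have "\<dots> = exp (\<delta> * real (Suc m)) * 2 * q^m" by (simp only: pd)
  finally have "exp (\<delta> * real (Suc m)) * 2 * (q/2)^m * 2^m = exp (\<delta> * real (Suc m)) * 2 * q^m" .
  note eq = this
  have "exp (\<delta> * real (Suc m)) * 2 * q^m \<le> 1 * 2^m" using A unfolding eq .
  then show ?thesis by simp
qed


theorem theorem2:
  fixes \<epsilon> :: real
  assumes "\<epsilon> > 0"
  shows "\<exists>\<delta>>0. \<forall>(k :: nat \<Rightarrow> nat) (A :: wc_alg).
           (\<forall>\<^sub>F n in sequentially. real (k n) < exp (\<delta> * real n)) \<longrightarrow>
           width_cut_alg k A \<longrightarrow>
           \<not> (asymp_ratio A \<ge> ereal (3/4 + \<epsilon>))"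
proof -
  define \<eta> where "\<eta> = min \<epsilon> (1/4)"
  have \<eta>: "0 < \<eta>" "\<eta> \<le> 1/4" "\<eta> \<le> \<epsilon>" using assms unfolding \<eta>_def by auto
  define s where "s = 1 - \<eta>"
  define x where "x = s^2"
  define lam where "lam = 1/2 - \<eta>"
  define q where "q = (1 + x) / (x powr lam)"
  have q: "q < 2" "0 < q" using q_lt_2[OF \<eta>(1) \<eta>(2)] unfolding q_def x_def s_def lam_def by auto
  have x: "0 < x" "x \<le> 1" using \<eta> unfolding x_def s_def by (auto simp: power_le_one)
  have lam: "1/4 \<le> lam" "lam \<le> 1/2" using \<eta> unfolding lam_def by auto
  define \<delta> where "\<delta> = - ln (q/2) / 2"
  have "ln (q/2) < 0" using q by simp
  then have dpos: "\<delta> > 0" unfolding \<delta>_def by simp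
  show ?thesis
  proof (intro exI[of _ \<delta>] conjI allI impI dpos)
    fix k :: "nat \<Rightarrow> nat" and A :: wc_alg
    assume ev: "\<forall>\<^sub>F n in sequentially. real (k n) < exp (\<delta> * real n)"
      and wc: "width_cut_alg k A"
    obtain N1 where N1: "\<And>n. n \<ge> N1 \<Longrightarrow> real (k n) < exp (\<delta> * real n)"
      using ev unfolding eventually_sequentially by blast
    define N2 where "N2 = nat \<lceil>(ln 2 + \<delta>) / \<delta>\<rceil>"
    have evr: "eventually (\<lambda>n. worst_ratio A n \<le> 3/4 + \<eta>/2) sequentially"
      unfolding eventually_sequentially
    proof (intro exI[of _ "N1 + N2 + 2"] allI impI)
      fix n assume n: "N1 + N2 + 2 \<le> n"
      define m where "m = n - 1"
      have nm: "n = Suc m" "m \<ge> 1" "m \<ge> N2" using n by (auto simp: m_def)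
      have "(ln 2 + \<delta>) / \<delta> \<le> real N2" unfolding N2_def by (rule real_nat_ceiling_ge)
      also have "\<dots> \<le> real m" using nm by simp
      finally have "(ln 2 + \<delta>) / \<delta> \<le> real m" .
      then have mlarge: "ln 2 + \<delta> \<le> \<delta> * real m" using dpos by (simp add: pos_divide_le_eq mult.commute)
      define t where "t = lam * real m"
      have t0: "0 \<le> t" using lam unfolding t_def by simp
      have "lam * real m \<le> 1 * real m" using lam by (intro mult_right_mono) auto
      then have tm: "t \<le> real m" unfolding t_def by simp
      define T where "T = real (card {D\<in>Pow {..<m}. real (card D) < t})"
      have ch: "T * x powr t \<le> (1 + x) ^ card {..<m}"
        unfolding T_def using chernoff_sets[of "{..<m}" x t] x t0 by simp
      have xp: "0 < x powr lam" using x by simp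
      have "x powr t = (x powr lam) powr real m" unfolding t_def by (simp add: powr_powr)
      also have "\<dots> = (x powr lam) ^ m" using xp by (rule powr_realpow)
      finally have "x powr t = (x powr lam) ^ m" .
      then have "T * (x powr lam) ^ m \<le> (1 + x) ^ m" using ch by simp
      then have "T \<le> (1 + x) ^ m / (x powr lam) ^ m" using xp by (simp add: pos_le_divide_eq)
      also have "\<dots> = q ^ m" unfolding q_def by (simp add: power_divide)
      finally have Tq: "T \<le> q ^ m" .
      have "N1 \<le> Suc m" using n nm by simp
      then have kn: "real (k (Suc m)) < exp (\<delta> * real (Suc m))" by (rule N1)
      have "real (k (Suc m)) * 2 * T \<le> real (k (Suc m)) * 2 * q ^ m"
        using Tq by (intro mult_left_mono) auto
      also have "\<dots> < exp (\<delta> * real (Suc m)) * 2 * q ^ m"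
        using kn q by (intro mult_strict_right_mono) auto
      also have "\<dots> \<le> 2 ^ m" by (rule key_ineq[OF q(2) q(1) \<delta>_def mlarge])
      finally have lt: "real (k (Suc m)) * 2 * T < 2 ^ m" .
      have "worst_ratio A (Suc m) \<le> (2 * real m - t) / (2 * real m)"
        using ratio_bound[OF wc nm(2) t0 tm] lt unfolding T_def by simp
      also have "\<dots> = 3/4 + \<eta>/2" using nm unfolding t_def lam_def by (simp add: field_simps)
      finally show "worst_ratio A n \<le> 3/4 + \<eta>/2" using nm by simp
    qed
    have "asymp_ratio A \<le> ereal (3/4 + \<eta>/2)"
      unfolding asymp_ratio_def
      by (rule Liminf_le) (auto intro: eventually_mono[OF evr])
    moreover have "ereal (3/4 + \<eta>/2) < ereal (3/4 + \<epsilon>)" using \<eta> by simp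
    ultimately show "\<not> (asymp_ratio A \<ge> ereal (3/4 + \<epsilon>))" by (meson leD order_trans)
  qed
qed

end
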